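(* Let $\beta>0$ and let $F$ be a fixed labelled graph on $v$ vertices. Then there exists $C>0$ such that the following holds for $1\leq t\leq 2^n$. If $V$ is a set of $n$ vertices, ${\mathcal F}_1,\dots,{\mathcal F}_t$ are families of labelled $v$-element subsets of $V$ with $|{\mathcal F}_i|\geq\beta n^v$ for each $i$, and $p=p(n)$ is such that $\Phi_F\geq Cn$, then asymptotically almost surely, for each $i\in[t]$ there is an embedding of $F$ in $G(n,p)$ on $V$ onto a set in ${\mathcal F}_i$ which respects the labellings.
   Context: $G(n,p)$ is the binomial random graph on $V$. For a graph $F$, $\Phi_F=\Phi_F(n,p):=\min\{n^{v_H}p^{e_H}:H\subseteq F,\ e_H>0\}$, where $v_H,e_H$ are the numbers of vertices and edges of $H$. An embedding respects labellings if the $j$-th vertex of $F$ is mapped to the $j$-th vertex of the labelled set. Asymptotically almost surely means with probability tending to $1$ as $n\to\infty$. *)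

theory Defs
  imports "HOL-Probability.Probability"
begin

definition pairs_of :: "'a set \<Rightarrow> 'a set set" where
  "pairs_of V = {e. e \<subseteq> V \<and> card e = 2}"

text \<open>Binomial random graph G(n,p) on V = {0..<n}: each pair is an edge independently
  with probability p. A graph is represented by its edge set.\<close>
definition gnp :: "nat \<Rightarrow> real \<Rightarrow> nat set set pmf" where
  "gnp n p = map_pmf (\<lambda>f. {e \<in> pairs_of {0..<n}. f e})
                     (Pi_pmf (pairs_of {0..<n}) False (\<lambda>_. bernoulli_pmf p))"

definition labelled_graph :: "nat \<Rightarrow> nat set set \<Rightarrow> bool" where
  "labelled_graph v EF \<longleftrightarrow> EF \<subseteq> pairs_of {0..<v}"

text \<open>Phi_F(n,p) = min over subgraphs H of F with e_H > 0 of n^(v_H) p^(e_H)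
  (infinite if F has no edges).\<close>
definition Phi :: "nat \<Rightarrow> nat set set \<Rightarrow> nat \<Rightarrow> real \<Rightarrow> ereal" where
  "Phi v EF n p = Inf {ereal (real n ^ card W * p ^ card D) | W D.
        W \<subseteq> {0..<v} \<and> D \<subseteq> EF \<and> (\<forall>e\<in>D. e \<subseteq> W) \<and> card D > 0}"

text \<open>Labelled v-element subsets of V: sequences of v distinct elements of V
  (the j-th element is the j-th labelled vertex).\<close>
definition labelled_subsets :: "'a set \<Rightarrow> nat \<Rightarrow> 'a list set" where
  "labelled_subsets V v = {xs. length xs = v \<and> distinct xs \<and> set xs \<subseteq> V}"

definition embeds_onto :: "nat set set \<Rightarrow> 'a list \<Rightarrow> 'a set set \<Rightarrow> bool" where
  "embeds_onto EF xs G \<longleftrightarrow> (\<forall>e\<in>EF. (\<lambda>j. xs ! j) ` e \<in> G)"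

end

theory Submission
  imports Defs
begin

definition wt :: "'a set \<Rightarrow> real \<Rightarrow> 'a set \<Rightarrow> real" where
  "wt E p S = p ^ card S * (1 - p) ^ card (E - S)"

definition Pr :: "'a set \<Rightarrow> real \<Rightarrow> ('a set \<Rightarrow> bool) \<Rightarrow> real" where
  "Pr E p Q = (\<Sum>S\<in>Pow E. if Q S then wt E p S else 0)"

lemma wt_nonneg: "0 \<le> p \<Longrightarrow> p \<le> 1 \<Longrightarrow> 0 \<le> wt E p S"
  by (simp add: wt_def)

lemma Pr_cong: "(\<And>S. S \<subseteq> E \<Longrightarrow> Q S = R S) \<Longrightarrow> Pr E p Q = Pr E p R"
  unfolding Pr_def by (intro sum.cong) auto

lemma Pr_nonneg: "0 \<le> p \<Longrightarrow> p \<le> 1 \<Longrightarrow> 0 \<le> Pr E p Q"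
  unfolding Pr_def by (intro sum_nonneg) (auto simp: wt_nonneg)

lemma Pr_mono: "0 \<le> p \<Longrightarrow> p \<le> 1 \<Longrightarrow> (\<And>S. S \<subseteq> E \<Longrightarrow> Q S \<Longrightarrow> R S) \<Longrightarrow> Pr E p Q \<le> Pr E p R"
  unfolding Pr_def by (intro sum_mono) (auto simp: wt_nonneg)

lemma Pr_split: "Pr E p Q = Pr E p (\<lambda>S. Q S \<and> R S) + Pr E p (\<lambda>S. Q S \<and> \<not> R S)"
  unfolding Pr_def sum.distrib[symmetric] by (intro sum.cong) auto

lemma Pr_or: "0 \<le> p \<Longrightarrow> p \<le> 1 \<Longrightarrow> Pr E p (\<lambda>S. Q S \<or> R S) \<le> Pr E p Q + Pr E p R"
  unfolding Pr_def sum.distrib[symmetric] by (intro sum_mono) (auto simp: wt_nonneg)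

lemma Pr_insert:
  assumes "finite E" "x \<notin> E"
  shows "Pr (insert x E) p Q = p * Pr E p (\<lambda>S. Q (insert x S)) + (1 - p) * Pr E p Q"
proof -
  have inj: "inj_on (insert x) (Pow E)" using assms(2) by (auto simp: inj_on_def)
  have disj: "Pow E \<inter> insert x ` Pow E = {}" using assms(2) by auto
  have w1: "wt (insert x E) p S = (1 - p) * wt E p S" if "S \<subseteq> E" for S
  proof -
    have "insert x E - S = insert x (E - S)" using that assms by auto
    then show ?thesis using that assms by (simp add: wt_def finite_subset)
  qed
  have w2: "wt (insert x E) p (insert x S) = p * wt E p S" if "S \<subseteq> E" for S
  proof -
    have "insert x E - insert x S = E - S" using that assms by auto
    moreover have "x \<notin> S" using that assms by auto
    ultimately show ?thesis using that assms by (simp add: wt_def finite_subset)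
  qed
  have "Pr (insert x E) p Q = (\<Sum>S\<in>Pow E. if Q S then wt (insert x E) p S else 0)
       + (\<Sum>S\<in>insert x ` Pow E. if Q S then wt (insert x E) p S else 0)"
    unfolding Pr_def Pow_insert using assms disj by (intro sum.union_disjoint) auto
  also have "(\<Sum>S\<in>insert x ` Pow E. if Q S then wt (insert x E) p S else 0)
      = (\<Sum>S\<in>Pow E. if Q (insert x S) then wt (insert x E) p (insert x S) else 0)"
    using inj by (simp add: sum.reindex)
  also have "\<dots> = p * Pr E p (\<lambda>S. Q (insert x S))"
    unfolding Pr_def sum_distrib_left by (intro sum.cong) (auto simp: w2)
  also have "(\<Sum>S\<in>Pow E. if Q S then wt (insert x E) p S else 0) = (1 - p) * Pr E p Q"
    unfolding Pr_def sum_distrib_left by (intro sum.cong) (auto simp: w1)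
  finally show ?thesis by simp
qed

lemma Pr_True: "finite E \<Longrightarrow> Pr E p (\<lambda>_. True) = 1"
proof (induction E rule: finite_induct)
  case empty
  then show ?case by (simp add: Pr_def wt_def)
next
  case (insert x F)
  then show ?case by (simp add: Pr_insert algebra_simps)
qed

lemma Pr_compl: "finite E \<Longrightarrow> Pr E p (\<lambda>S. \<not> Q S) = 1 - Pr E p Q"
  using Pr_split[of E p "\<lambda>_. True" Q] Pr_True[of E p] by simp

lemma Pr_product:
  assumes "finite X" "finite Y" "X \<inter> Y = {}"
  shows "Pr (X \<union> Y) p (\<lambda>S. Q (S \<inter> X) \<and> R (S \<inter> Y)) = Pr X p Q * Pr Y p R"
  using assms
proof (induction X arbitrary: Q rule: finite_induct)
  case empty
  then show ?case
  proof -
    have "Pr ({} \<union> Y) p (\<lambda>S. Q (S \<inter> {}) \<and> R (S \<inter> Y)) = (if Q {} then Pr Y p R else 0)"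
      unfolding Pr_def by (auto intro!: sum.cong simp: Int_absorb2)
    moreover have "Pr {} p Q = (if Q {} then 1 else 0)" by (simp add: Pr_def wt_def)
    ultimately show ?thesis by simp
  qed
next
  case (insert x F)
  have xY: "x \<notin> F \<union> Y" using insert by auto
  have "Pr (insert x F \<union> Y) p (\<lambda>S. Q (S \<inter> insert x F) \<and> R (S \<inter> Y))
     = p * Pr (F \<union> Y) p (\<lambda>S. Q (insert x S \<inter> insert x F) \<and> R (insert x S \<inter> Y))
       + (1 - p) * Pr (F \<union> Y) p (\<lambda>S. Q (S \<inter> insert x F) \<and> R (S \<inter> Y))"
    using Pr_insert[OF _ xY] insert by simp
  also have "Pr (F \<union> Y) p (\<lambda>S. Q (insert x S \<inter> insert x F) \<and> R (insert x S \<inter> Y))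
        = Pr (F \<union> Y) p (\<lambda>S. (\<lambda>T. Q (insert x T)) (S \<inter> F) \<and> R (S \<inter> Y))"
    using insert by (intro Pr_cong) auto
  also have "\<dots> = Pr F p (\<lambda>T. Q (insert x T)) * Pr Y p R"
    using insert by (intro insert.IH) auto
  also have "Pr (F \<union> Y) p (\<lambda>S. Q (S \<inter> insert x F) \<and> R (S \<inter> Y))
        = Pr (F \<union> Y) p (\<lambda>S. Q (S \<inter> F) \<and> R (S \<inter> Y))"
    using insert xY by (intro Pr_cong) (auto simp: Int_insert_right)
  also have "\<dots> = Pr F p Q * Pr Y p R"
    using insert by (intro insert.IH) auto
  also have "p * (Pr F p (\<lambda>T. Q (insert x T)) * Pr Y p R) + (1 - p) * (Pr F p Q * Pr Y p R)
     = (p * Pr F p (\<lambda>T. Q (insert x T)) + (1 - p) * Pr F p Q) * Pr Y p R"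
    by (simp add: algebra_simps)
  also have "p * Pr F p (\<lambda>T. Q (insert x T)) + (1 - p) * Pr F p Q = Pr (insert x F) p Q"
    using insert by (intro Pr_insert[symmetric]) auto
  finally show ?case .
qed

lemma Pr_empty: "Pr {} p Q = (if Q {} then 1 else 0)"
  by (simp add: Pr_def wt_def)

lemma harris:
  assumes "finite E" "0 \<le> p" "p \<le> 1"
    and "\<And>S T. S \<subseteq> T \<Longrightarrow> T \<subseteq> E \<Longrightarrow> Q S \<Longrightarrow> Q T"
    and "\<And>S T. S \<subseteq> T \<Longrightarrow> T \<subseteq> E \<Longrightarrow> R T \<Longrightarrow> R S"
  shows "Pr E p (\<lambda>S. Q S \<and> R S) \<le> Pr E p Q * Pr E p R"
  using assms
proof (induction E arbitrary: Q R rule: finite_induct)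
  case empty
  then show ?case by (simp add: Pr_empty)
next
  case (insert x F)
  define a1 where "a1 = Pr F p (\<lambda>S. Q (insert x S))"
  define a0 where "a0 = Pr F p Q"
  define c1 where "c1 = Pr F p (\<lambda>S. R (insert x S))"
  define c0 where "c0 = Pr F p R"
  have mQ: "Q (insert x T)" if "S \<subseteq> T" "T \<subseteq> F" "Q (insert x S)" for S T
    by (rule insert.prems(3)[of "insert x S" "insert x T"]) (use that in auto)
  have mR: "R (insert x S)" if "S \<subseteq> T" "T \<subseteq> F" "R (insert x T)" for S T
    by (rule insert.prems(4)[of "insert x S" "insert x T"]) (use that in auto)
  have mQ0: "Q T" if "S \<subseteq> T" "T \<subseteq> F" "Q S" for S T
    by (rule insert.prems(3)[of S T]) (use that in auto)
  have mR0: "R S" if "S \<subseteq> T" "T \<subseteq> F" "R T" for S T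
    by (rule insert.prems(4)[of S T]) (use that in auto)
  have h1: "Pr F p (\<lambda>S. Q (insert x S) \<and> R (insert x S)) \<le> a1 * c1"
    unfolding a1_def c1_def
    apply (rule insert.IH[OF insert.prems(1,2)])
     apply (rule mQ; assumption)
    apply (rule mR; assumption)
    done
  have h0: "Pr F p (\<lambda>S. Q S \<and> R S) \<le> a0 * c0"
    unfolding a0_def c0_def
    apply (rule insert.IH[OF insert.prems(1,2)])
     apply (rule mQ0; assumption)
    apply (rule mR0; assumption)
    done
  have "a0 \<le> a1" unfolding a0_def a1_def
  proof (rule Pr_mono)
    fix S assume "S \<subseteq> F" "Q S"
    then show "Q (insert x S)" by (intro insert.prems(3)[of S "insert x S"]) auto
  qed (use insert.prems in auto)
  have "c1 \<le> c0" unfolding c0_def c1_def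
  proof (rule Pr_mono)
    fix S assume "S \<subseteq> F" "R (insert x S)"
    then show "R S" by (intro insert.prems(4)[of S "insert x S"]) auto
  qed (use insert.prems in auto)
  have "Pr (insert x F) p (\<lambda>S. Q S \<and> R S) = p * Pr F p (\<lambda>S. Q (insert x S) \<and> R (insert x S)) + (1 - p) * Pr F p (\<lambda>S. Q S \<and> R S)"
    using insert by (simp add: Pr_insert)
  also have "\<dots> \<le> p * (a1 * c1) + (1 - p) * (a0 * c0)"
    using h1 h0 insert.prems by (intro add_mono mult_left_mono) auto
  also have "\<dots> = (p * a1 + (1 - p) * a0) * (p * c1 + (1 - p) * c0) - p * (1 - p) * ((a1 - a0) * (c0 - c1))"
    by (simp add: algebra_simps)
  also have "\<dots> \<le> (p * a1 + (1 - p) * a0) * (p * c1 + (1 - p) * c0)"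
    using \<open>a0 \<le> a1\<close> \<open>c1 \<le> c0\<close> insert.prems by (simp add: mult_nonneg_nonneg)
  also have "\<dots> = Pr (insert x F) p Q * Pr (insert x F) p R"
    using insert by (simp add: Pr_insert a1_def a0_def c1_def c0_def)
  finally show ?case .
qed

lemma Pr_subset:
  assumes "finite E" "K \<subseteq> E"
  shows "Pr E p (\<lambda>S. K \<subseteq> S) = p ^ card K"
proof -
  have fK: "finite K" using assms finite_subset by auto
  have eq: "E = K \<union> (E - K)" using assms by auto
  have "Pr E p (\<lambda>S. K \<subseteq> S) = Pr (K \<union> (E - K)) p (\<lambda>S. (\<lambda>T. K \<subseteq> T) (S \<inter> K) \<and> (\<lambda>_. True) (S \<inter> (E - K)))"
    by (subst eq[symmetric]) (auto intro: Pr_cong)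
  also have "\<dots> = Pr K p (\<lambda>T. K \<subseteq> T) * Pr (E - K) p (\<lambda>_. True)"
    using assms fK by (intro Pr_product) auto
  also have "Pr K p (\<lambda>T. K \<subseteq> T) = p ^ card K"
  proof -
    have "Pr K p (\<lambda>T. K \<subseteq> T) = (\<Sum>S\<in>Pow K. if S = K then wt K p S else 0)"
      unfolding Pr_def by (intro sum.cong) auto
    also have "\<dots> = wt K p K" using fK by (simp add: sum.delta)
    finally show ?thesis by (simp add: wt_def)
  qed
  finally show ?thesis using assms by (simp add: Pr_True)
qed

lemma Pr_indep:
  assumes "finite E" "K \<subseteq> E" "\<And>S. S \<subseteq> E \<Longrightarrow> R S = R (S - K)"
  shows "Pr E p (\<lambda>S. K \<subseteq> S \<and> R S) = p ^ card K * Pr E p R"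
proof -
  have fK: "finite K" using assms finite_subset by auto
  have eq: "E = K \<union> (E - K)" using assms by auto
  have r: "R S = R (S \<inter> (E - K))" if "S \<subseteq> E" for S
  proof -
    have "S \<inter> (E - K) = S - K" using that by auto
    then show ?thesis using assms(3)[OF that] by simp
  qed
  have "Pr E p (\<lambda>S. K \<subseteq> S \<and> R S) = Pr (K \<union> (E - K)) p (\<lambda>S. (\<lambda>T. K \<subseteq> T) (S \<inter> K) \<and> R (S \<inter> (E - K)))"
    by (subst eq[symmetric], rule Pr_cong) (use r in auto)
  also have "\<dots> = Pr K p (\<lambda>T. K \<subseteq> T) * Pr (E - K) p R"
    using assms fK by (intro Pr_product) auto
  also have "Pr K p (\<lambda>T. K \<subseteq> T) = p ^ card K"
    using fK by (rule Pr_subset) auto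
  also have "Pr (E - K) p R = Pr E p R"
  proof -
    have "Pr E p R = Pr (K \<union> (E - K)) p (\<lambda>S. (\<lambda>_. True) (S \<inter> K) \<and> R (S \<inter> (E - K)))"
      by (subst eq[symmetric], rule Pr_cong) (use r in auto)
    also have "\<dots> = Pr K p (\<lambda>_. True) * Pr (E - K) p R"
      using assms fK by (intro Pr_product) auto
    finally show ?thesis using fK by (simp add: Pr_True)
  qed
  finally show ?thesis .
qed

lemma Pr_union_bound:
  assumes "finite J" "0 \<le> p" "p \<le> 1"
  shows "Pr E p (\<lambda>S. \<exists>j\<in>J. Q j S) \<le> (\<Sum>j\<in>J. Pr E p (Q j))"
  using assms(1)
proof (induction J rule: finite_induct)
  case empty
  then show ?case by (simp add: Pr_def)
next
  case (insert x F)
  have "Pr E p (\<lambda>S. \<exists>j\<in>insert x F. Q j S) = Pr E p (\<lambda>S. Q x S \<or> (\<exists>j\<in>F. Q j S))"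
    by simp
  also have "\<dots> \<le> Pr E p (Q x) + Pr E p (\<lambda>S. \<exists>j\<in>F. Q j S)"
    using assms(2,3) by (rule Pr_or)
  also have "\<dots> \<le> Pr E p (Q x) + (\<Sum>j\<in>F. Pr E p (Q j))"
    using insert by simp
  finally show ?case using insert by simp
qed

lemma janson:
  fixes A :: "'i \<Rightarrow> 'e set"
  assumes E: "finite E" and p: "0 \<le> p" "p \<le> 1" and I: "finite I" and AE: "\<forall>i\<in>I. A i \<subseteq> E"
  shows "Pr E p (\<lambda>S. \<forall>i\<in>I. \<not> A i \<subseteq> S) \<le> exp (- (\<Sum>i\<in>I. p ^ card (A i)) +
     (\<Sum>k\<in>I. \<Sum>j\<in>I. if k \<noteq> j \<and> A k \<inter> A j \<noteq> {} then p ^ card (A k \<union> A j) else 0))"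
  using I AE
proof (induction I rule: finite_induct)
  case empty
  then show ?case by (simp add: Pr_True E)
next
  case (insert i I)
  define f where "f = (\<lambda>k j. if k \<noteq> j \<and> A k \<inter> A j \<noteq> {} then p ^ card (A k \<union> A j) else (0::real))"
  define \<mu> where "\<mu> = (\<Sum>k\<in>I. p ^ card (A k))"
  define \<Delta> where "\<Delta> = (\<Sum>k\<in>I. \<Sum>j\<in>I. f k j)"
  define \<sigma> where "\<sigma> = (\<Sum>j\<in>I. f i j)"
  define D where "D = (\<lambda>S. \<forall>j\<in>I. \<not> A j \<subseteq> S)"
  define Cn where "Cn = (\<lambda>S. \<forall>j\<in>I. A j \<inter> A i = {} \<longrightarrow> \<not> A j \<subseteq> S)"
  define Bn where "Bn = (\<lambda>S. \<exists>j\<in>I. A j \<inter> A i \<noteq> {} \<and> A j \<subseteq> S)"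
  define a where "a = p ^ card (A i)"
  have IH: "Pr E p D \<le> exp (- \<mu> + \<Delta>)"
    using insert by (simp add: D_def \<mu>_def \<Delta>_def f_def)
  have Ai: "A i \<subseteq> E" using insert by auto
  have AI: "\<forall>j\<in>I. A j \<subseteq> E" using insert by auto
  have fnn: "0 \<le> f k j" for k j using p by (simp add: f_def)
  have PrD: "0 \<le> Pr E p D" using p by (rule Pr_nonneg)
  have PrC: "0 \<le> Pr E p Cn" using p by (rule Pr_nonneg)
  have ha: "Pr E p (\<lambda>S. A i \<subseteq> S \<and> Cn S) = a * Pr E p Cn"
    unfolding a_def by (rule Pr_indep[OF E Ai]) (auto simp: Cn_def)
  have hb: "Pr E p (\<lambda>S. A i \<subseteq> S \<and> Cn S) = Pr E p (\<lambda>S. (A i \<subseteq> S \<and> Bn S) \<and> Cn S) + Pr E p (\<lambda>S. A i \<subseteq> S \<and> D S)"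
  proof -
    have "Pr E p (\<lambda>S. A i \<subseteq> S \<and> Cn S) = Pr E p (\<lambda>S. (A i \<subseteq> S \<and> Cn S) \<and> Bn S) + Pr E p (\<lambda>S. (A i \<subseteq> S \<and> Cn S) \<and> \<not> Bn S)"
      by (rule Pr_split)
    also have "Pr E p (\<lambda>S. (A i \<subseteq> S \<and> Cn S) \<and> Bn S) = Pr E p (\<lambda>S. (A i \<subseteq> S \<and> Bn S) \<and> Cn S)"
      by (rule Pr_cong) auto
    also have "Pr E p (\<lambda>S. (A i \<subseteq> S \<and> Cn S) \<and> \<not> Bn S) = Pr E p (\<lambda>S. A i \<subseteq> S \<and> D S)"
      by (rule Pr_cong) (auto simp: Cn_def Bn_def D_def)
    finally show ?thesis .
  qed
  have hc: "Pr E p (\<lambda>S. (A i \<subseteq> S \<and> Bn S) \<and> Cn S) \<le> Pr E p (\<lambda>S. A i \<subseteq> S \<and> Bn S) * Pr E p Cn"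
    by (rule harris[OF E p]) (unfold Bn_def Cn_def, blast+)
  have hd: "Pr E p (\<lambda>S. A i \<subseteq> S \<and> Bn S) \<le> \<sigma>"
  proof -
    have "Pr E p (\<lambda>S. A i \<subseteq> S \<and> Bn S) \<le> Pr E p (\<lambda>S. \<exists>j\<in>I. A j \<inter> A i \<noteq> {} \<and> A i \<union> A j \<subseteq> S)"
      by (rule Pr_mono[OF p]) (auto simp: Bn_def)
    also have "\<dots> \<le> (\<Sum>j\<in>I. Pr E p (\<lambda>S. A j \<inter> A i \<noteq> {} \<and> A i \<union> A j \<subseteq> S))"
      by (rule Pr_union_bound[OF insert(1) p])
    also have "\<dots> = \<sigma>"
      unfolding \<sigma>_def
    proof (rule sum.cong[OF refl])
      fix j assume j: "j \<in> I"
      then have "i \<noteq> j" using insert by auto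
      show "Pr E p (\<lambda>S. A j \<inter> A i \<noteq> {} \<and> A i \<union> A j \<subseteq> S) = f i j"
      proof (cases "A j \<inter> A i = {}")
        case True
        then show ?thesis by (simp add: f_def Pr_def Int_commute)
      next
        case False
        have "Pr E p (\<lambda>S. A j \<inter> A i \<noteq> {} \<and> A i \<union> A j \<subseteq> S) = Pr E p (\<lambda>S. A i \<union> A j \<subseteq> S)"
          using False by (intro Pr_cong) auto
        also have "\<dots> = p ^ card (A i \<union> A j)"
          using Ai AI j by (intro Pr_subset[OF E]) auto
        finally show ?thesis using \<open>i \<noteq> j\<close> False by (simp add: f_def Int_commute)
      qed
    qed
    finally show ?thesis .
  qed
  have he: "Pr E p D \<le> Pr E p Cn"
    by (rule Pr_mono[OF p]) (auto simp: D_def Cn_def)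
  have hf: "Pr E p (\<lambda>S. \<forall>j\<in>insert i I. \<not> A j \<subseteq> S) = Pr E p D - Pr E p (\<lambda>S. A i \<subseteq> S \<and> D S)"
  proof -
    have "Pr E p D = Pr E p (\<lambda>S. D S \<and> A i \<subseteq> S) + Pr E p (\<lambda>S. D S \<and> \<not> A i \<subseteq> S)"
      by (rule Pr_split)
    moreover have "Pr E p (\<lambda>S. D S \<and> A i \<subseteq> S) = Pr E p (\<lambda>S. A i \<subseteq> S \<and> D S)"
      by (rule Pr_cong) auto
    moreover have "Pr E p (\<lambda>S. D S \<and> \<not> A i \<subseteq> S) = Pr E p (\<lambda>S. \<forall>j\<in>insert i I. \<not> A j \<subseteq> S)"
      by (rule Pr_cong) (auto simp: D_def)
    ultimately show ?thesis by simp
  qed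
  have hg: "(a - \<sigma>) * Pr E p D \<le> Pr E p (\<lambda>S. A i \<subseteq> S \<and> D S)"
  proof -
    have X: "Pr E p (\<lambda>S. (A i \<subseteq> S \<and> Bn S) \<and> Cn S) \<le> \<sigma> * Pr E p Cn"
      using hc hd PrC by (meson mult_right_mono order_trans)
    have Y: "(a - \<sigma>) * Pr E p Cn \<le> Pr E p (\<lambda>S. A i \<subseteq> S \<and> D S)"
      using ha hb X by (simp add: algebra_simps)
    have Z: "0 \<le> Pr E p (\<lambda>S. A i \<subseteq> S \<and> D S)" using p by (rule Pr_nonneg)
    show ?thesis
    proof (cases "a - \<sigma> \<ge> 0")
      case True
      then have "(a - \<sigma>) * Pr E p D \<le> (a - \<sigma>) * Pr E p Cn" using he True by (simp add: mult_left_mono)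
      then show ?thesis using Y by linarith
    next
      case False
      then have "(a - \<sigma>) * Pr E p D \<le> 0" using PrD by (simp add: mult_nonpos_nonneg)
      then show ?thesis using Z by linarith
    qed
  qed
  have "Pr E p (\<lambda>S. \<forall>j\<in>insert i I. \<not> A j \<subseteq> S) \<le> Pr E p D * (1 + (\<sigma> - a))"
    using hf hg by (simp add: algebra_simps)
  also have "\<dots> \<le> Pr E p D * exp (\<sigma> - a)"
    using PrD by (intro mult_left_mono) (auto simp: exp_ge_add_one_self)
  also have "\<dots> \<le> exp (- \<mu> + \<Delta>) * exp (\<sigma> - a)"
    using IH by (intro mult_right_mono) auto
  also have "\<dots> = exp (- (a + \<mu>) + (\<Delta> + \<sigma>))"
    by (simp add: exp_add[symmetric] algebra_simps)
  also have "\<dots> \<le> exp (- (a + \<mu>) + (\<Sum>k\<in>insert i I. \<Sum>j\<in>insert i I. f k j))"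
  proof -
    have "(\<Sum>k\<in>insert i I. \<Sum>j\<in>insert i I. f k j) = (f i i + \<sigma>) + (\<Sum>k\<in>I. f k i + (\<Sum>j\<in>I. f k j))"
      using insert by (simp add: sum.insert \<sigma>_def)
    also have "f i i = 0" by (simp add: f_def)
    also have "(\<Sum>k\<in>I. f k i + (\<Sum>j\<in>I. f k j)) \<ge> \<Delta>"
      unfolding \<Delta>_def by (intro sum_mono) (use fnn in auto)
    ultimately show ?thesis by simp
  qed
  also have "\<dots> = exp (- (\<Sum>k\<in>insert i I. p ^ card (A k)) +
     (\<Sum>k\<in>insert i I. \<Sum>j\<in>insert i I. if k \<noteq> j \<and> A k \<inter> A j \<noteq> {} then p ^ card (A k \<union> A j) else 0))"
    using insert by (simp add: a_def \<mu>_def f_def)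
  finally show ?case .
qed

lemma Pr_sum_weight:
  "(\<Sum>J\<in>Pow I. wt I q J * (if Q J then c else 0)) = c * Pr I q Q"
  unfolding Pr_def sum_distrib_left by (intro sum.cong) auto

lemma exp_linear:
  assumes "finite I" "0 \<le> q" "q \<le> 1"
  shows "(\<Sum>J\<in>Pow I. wt I q J * (\<Sum>i\<in>J. a i)) = q * (\<Sum>i\<in>I. a i)"
proof -
  have "(\<Sum>J\<in>Pow I. wt I q J * (\<Sum>i\<in>J. a i)) = (\<Sum>J\<in>Pow I. \<Sum>i\<in>I. wt I q J * (if i \<in> J then a i else 0))"
  proof (intro sum.cong refl)
    fix J assume "J \<in> Pow I"
    then have "(\<Sum>i\<in>J. a i) = (\<Sum>i\<in>I. if i \<in> J then a i else 0)"
      using assms(1) by (simp add: sum.inter_restrict[symmetric] Int_absorb1)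
    then show "wt I q J * (\<Sum>i\<in>J. a i) = (\<Sum>i\<in>I. wt I q J * (if i \<in> J then a i else 0))"
      by (simp add: sum_distrib_left)
  qed
  also have "\<dots> = (\<Sum>i\<in>I. \<Sum>J\<in>Pow I. wt I q J * (if i \<in> J then a i else 0))"
    by (rule sum.swap)
  also have "\<dots> = (\<Sum>i\<in>I. a i * Pr I q (\<lambda>J. {i} \<subseteq> J))"
    by (intro sum.cong refl) (simp add: Pr_sum_weight[symmetric])
  also have "\<dots> = (\<Sum>i\<in>I. a i * q)"
  proof (intro sum.cong refl)
    fix i assume "i \<in> I"
    then have "Pr I q (\<lambda>J. {i} \<subseteq> J) = q ^ card {i}" using assms by (intro Pr_subset) auto
    then show "a i * Pr I q (\<lambda>J. {i} \<subseteq> J) = a i * q" by simp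
  qed
  finally show ?thesis by (simp add: sum_distrib_left mult.commute)
qed

lemma exp_quadratic:
  assumes "finite I" "0 \<le> q" "q \<le> 1" "\<And>i. f i i = 0"
  shows "(\<Sum>J\<in>Pow I. wt I q J * (\<Sum>k\<in>J. \<Sum>j\<in>J. f k j)) = q^2 * (\<Sum>k\<in>I. \<Sum>j\<in>I. f k j)"
proof -
  have "(\<Sum>J\<in>Pow I. wt I q J * (\<Sum>k\<in>J. \<Sum>j\<in>J. f k j)) = (\<Sum>J\<in>Pow I. \<Sum>k\<in>I. \<Sum>j\<in>I. wt I q J * (if {k, j} \<subseteq> J then f k j else 0))"
  proof (intro sum.cong refl)
    fix J assume "J \<in> Pow I"
    then have JI: "I \<inter> J = J" by auto
    have "(\<Sum>k\<in>I. \<Sum>j\<in>I. if {k, j} \<subseteq> J then f k j else 0) = (\<Sum>k\<in>I. if k \<in> J then (\<Sum>j\<in>I. if j \<in> J then f k j else 0) else 0)"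
      by (intro sum.cong refl) auto
    also have "\<dots> = (\<Sum>k\<in>I. if k \<in> J then (\<Sum>j\<in>J. f k j) else 0)"
      using assms(1) JI by (intro sum.cong refl) (metis sum.inter_restrict)
    also have "\<dots> = (\<Sum>k\<in>J. \<Sum>j\<in>J. f k j)"
      using assms(1) JI by (metis (no_types) sum.inter_restrict)
    finally have "(\<Sum>k\<in>J. \<Sum>j\<in>J. f k j) = (\<Sum>k\<in>I. \<Sum>j\<in>I. if {k, j} \<subseteq> J then f k j else 0)" ..
    then show "wt I q J * (\<Sum>k\<in>J. \<Sum>j\<in>J. f k j) = (\<Sum>k\<in>I. \<Sum>j\<in>I. wt I q J * (if {k, j} \<subseteq> J then f k j else 0))"
      by (simp add: sum_distrib_left)
  qed
  also have "\<dots> = (\<Sum>k\<in>I. \<Sum>J\<in>Pow I. \<Sum>j\<in>I. wt I q J * (if {k, j} \<subseteq> J then f k j else 0))"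
    by (rule sum.swap)
  also have "\<dots> = (\<Sum>k\<in>I. \<Sum>j\<in>I. \<Sum>J\<in>Pow I. wt I q J * (if {k, j} \<subseteq> J then f k j else 0))"
    by (intro sum.cong refl sum.swap)
  also have "\<dots> = (\<Sum>k\<in>I. \<Sum>j\<in>I. f k j * Pr I q (\<lambda>J. {k, j} \<subseteq> J))"
    by (intro sum.cong refl) (simp add: Pr_sum_weight)
  also have "\<dots> = (\<Sum>k\<in>I. \<Sum>j\<in>I. q^2 * f k j)"
  proof (intro sum.cong refl)
    fix k j assume "k \<in> I" "j \<in> I"
    then have "Pr I q (\<lambda>J. {k, j} \<subseteq> J) = q ^ card {k, j}" using assms by (intro Pr_subset) auto
    then show "f k j * Pr I q (\<lambda>J. {k, j} \<subseteq> J) = q^2 * f k j"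
      using assms(4) by (cases "k = j") (auto simp: power2_eq_square)
  qed
  finally show ?thesis by (simp add: sum_distrib_left)
qed

lemma janson_q:
  fixes A :: "'i \<Rightarrow> 'e set"
  assumes E: "finite E" and p: "0 \<le> p" "p \<le> 1" and I: "finite I" and AE: "\<forall>i\<in>I. A i \<subseteq> E"
    and q: "0 \<le> q" "q \<le> 1"
  shows "Pr E p (\<lambda>S. \<forall>i\<in>I. \<not> A i \<subseteq> S) \<le> exp (- (q * (\<Sum>i\<in>I. p ^ card (A i)) - q^2 *
     (\<Sum>k\<in>I. \<Sum>j\<in>I. if k \<noteq> j \<and> A k \<inter> A j \<noteq> {} then p ^ card (A k \<union> A j) else 0)))"
proof -
  define f where "f = (\<lambda>k j. if k \<noteq> j \<and> A k \<inter> A j \<noteq> {} then p ^ card (A k \<union> A j) else (0::real))"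
  define g where "g = (\<lambda>J. (\<Sum>i\<in>J. p ^ card (A i)) - (\<Sum>k\<in>J. \<Sum>j\<in>J. f k j))"
  have fin: "finite (g ` Pow I)" using I by simp
  have "Max (g ` Pow I) \<in> g ` Pow I" using fin by (intro Max_in) auto
  then obtain J where J: "J \<in> Pow I" "g J = Max (g ` Pow I)" by auto
  have ge: "g J' \<le> g J" if "J' \<in> Pow I" for J'
    using J(2) Max_ge[OF fin] that by auto
  have "q * (\<Sum>i\<in>I. p ^ card (A i)) - q^2 * (\<Sum>k\<in>I. \<Sum>j\<in>I. f k j) = (\<Sum>J'\<in>Pow I. wt I q J' * g J')"
    unfolding g_def right_diff_distrib sum_subtractf
    using I q by (simp add: exp_linear exp_quadratic f_def)
  also have "\<dots> \<le> (\<Sum>J'\<in>Pow I. wt I q J' * g J)"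
    using ge q by (intro sum_mono mult_left_mono) (auto simp: wt_nonneg)
  also have "\<dots> = g J * Pr I q (\<lambda>_. True)"
    unfolding Pr_def by (simp add: sum_distrib_left sum_distrib_right mult.commute)
  also have "\<dots> = g J" using I by (simp add: Pr_True)
  finally have gJ: "q * (\<Sum>i\<in>I. p ^ card (A i)) - q^2 * (\<Sum>k\<in>I. \<Sum>j\<in>I. f k j) \<le> g J" .
  have "Pr E p (\<lambda>S. \<forall>i\<in>I. \<not> A i \<subseteq> S) \<le> Pr E p (\<lambda>S. \<forall>i\<in>J. \<not> A i \<subseteq> S)"
    using J(1) by (intro Pr_mono[OF p]) auto
  also have "\<dots> \<le> exp (- g J)"
    unfolding g_def f_def using J(1) I AE by (intro order_trans[OF janson[OF E p]]) (auto intro: finite_subset)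
  also have "\<dots> \<le> exp (- (q * (\<Sum>i\<in>I. p ^ card (A i)) - q^2 * (\<Sum>k\<in>I. \<Sum>j\<in>I. f k j)))"
    using gJ by simp
  finally show ?thesis unfolding f_def .
qed

lemma janson_c:
  fixes A :: "'i \<Rightarrow> 'e set"
  assumes E: "finite E" and p: "0 \<le> p" "p \<le> 1" and I: "finite I" and AE: "\<forall>i\<in>I. A i \<subseteq> E"
    and c1: "c \<le> (\<Sum>i\<in>I. p ^ card (A i)) / 2"
    and c2: "c * (4 * (\<Sum>k\<in>I. \<Sum>j\<in>I. if k \<noteq> j \<and> A k \<inter> A j \<noteq> {} then p ^ card (A k \<union> A j) else 0))
               \<le> (\<Sum>i\<in>I. p ^ card (A i))^2"
  shows "Pr E p (\<lambda>S. \<forall>i\<in>I. \<not> A i \<subseteq> S) \<le> exp (- c)"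
proof -
  define \<mu> where "\<mu> = (\<Sum>i\<in>I. p ^ card (A i))"
  define \<Delta> where "\<Delta> = (\<Sum>k\<in>I. \<Sum>j\<in>I. if k \<noteq> j \<and> A k \<inter> A j \<noteq> {} then p ^ card (A k \<union> A j) else (0::real))"
  have \<mu>0: "0 \<le> \<mu>" unfolding \<mu>_def using p by (intro sum_nonneg) auto
  have \<Delta>0: "0 \<le> \<Delta>" unfolding \<Delta>_def using p by (intro sum_nonneg) auto
  show ?thesis
  proof (cases "\<Delta> \<le> \<mu> / 2")
    case True
    have "Pr E p (\<lambda>S. \<forall>i\<in>I. \<not> A i \<subseteq> S) \<le> exp (- (1 * \<mu> - 1^2 * \<Delta>))"
      unfolding \<mu>_def \<Delta>_def by (rule janson_q[OF E p I AE]) auto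
    also have "\<dots> \<le> exp (- c)" using True c1 unfolding \<mu>_def[symmetric] by simp
    finally show ?thesis .
  next
    case False
    define q where "q = \<mu> / (2 * \<Delta>)"
    have \<Delta>pos: "\<Delta> > 0" using False \<mu>0 by linarith
    have q0: "0 \<le> q" "q \<le> 1" using \<Delta>pos \<mu>0 False by (auto simp: q_def field_simps)
    have "Pr E p (\<lambda>S. \<forall>i\<in>I. \<not> A i \<subseteq> S) \<le> exp (- (q * \<mu> - q^2 * \<Delta>))"
      unfolding \<mu>_def \<Delta>_def by (rule janson_q[OF E p I AE q0])
    also have "q * \<mu> - q^2 * \<Delta> = \<mu>^2 / (4 * \<Delta>)"
      using \<Delta>pos by (simp add: q_def field_simps power2_eq_square)
    also have "c \<le> \<mu>^2 / (4 * \<Delta>)"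
      using c2 \<Delta>pos unfolding \<mu>_def[symmetric] \<Delta>_def[symmetric] by (simp add: field_simps)
    then have "exp (- (\<mu>^2 / (4 * \<Delta>))) \<le> exp (- c)" by simp
    finally show ?thesis .
  qed
qed

lemma finite_pairs_of: "finite V \<Longrightarrow> finite (pairs_of V)"
  unfolding pairs_of_def by (rule finite_subset[of _ "Pow V"]) auto

lemma pmf_gnp:
  assumes p: "0 \<le> p" "p \<le> 1"
  shows "pmf (gnp n p) S = (if S \<subseteq> pairs_of {0..<n} then wt (pairs_of {0..<n}) p S else 0)"
proof -
  define E where "E = pairs_of {0..<n}"
  have fE: "finite E" unfolding E_def by (intro finite_pairs_of) auto
  define M where "M = Pi_pmf E False (\<lambda>_. bernoulli_pmf p)"
  define g where "g = (\<lambda>f. {e \<in> E. f e})"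
  have "pmf (gnp n p) S = measure_pmf.prob M (g -` {S})"
    unfolding gnp_def E_def[symmetric] M_def[symmetric] g_def[symmetric] by (simp add: pmf_map)
  also have "\<dots> = (if S \<subseteq> E then wt E p S else 0)"
  proof (cases "S \<subseteq> E")
    case True
    define chi where "chi = (\<lambda>e. e \<in> S)"
    have "measure_pmf.prob M (g -` {S}) = measure_pmf.prob M {chi}"
    proof (rule measure_prob_cong_0)
      fix f assume f: "f \<in> g -` {S} - {chi}"
      then have "f \<noteq> chi" "{e \<in> E. f e} = S" by (auto simp: g_def)
      then have "\<exists>x. x \<notin> E \<and> f x \<noteq> False"
        using True unfolding chi_def by (metis (mono_tags, lifting) mem_Collect_eq subsetD ext)
      then show "pmf M f = 0" unfolding M_def using fE by (auto simp: pmf_Pi)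
    next
      fix f assume "f \<in> {chi} - g -` {S}"
      then show "pmf M f = 0" using True by (auto simp: g_def chi_def)
    qed
    also have "\<dots> = pmf M chi" by (simp add: measure_pmf_single)
    also have "\<dots> = (\<Prod>e\<in>E. pmf (bernoulli_pmf p) (e \<in> S))"
      unfolding M_def using fE True by (subst pmf_Pi) (auto simp: chi_def)
    also have "\<dots> = (\<Prod>e\<in>E. if e \<in> S then p else 1 - p)"
      using p by (intro prod.cong) auto
    also have "\<dots> = p ^ card (E \<inter> {x. x \<in> S}) * (1 - p) ^ card (E \<inter> - {x. x \<in> S})"
      using fE by (simp add: prod.If_cases)
    also have "E \<inter> {x. x \<in> S} = S" using True by auto
    also have "E \<inter> - {x. x \<in> S} = E - S" by auto
    finally show ?thesis using True by (simp add: wt_def)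
  next
    case False
    then have "g -` {S} = {}" by (auto simp: g_def)
    then show ?thesis using False by simp
  qed
  finally show ?thesis unfolding E_def .
qed

lemma prob_gnp:
  assumes p: "0 \<le> p" "p \<le> 1"
  shows "measure_pmf.prob (gnp n p) {G. Q G} = Pr (pairs_of {0..<n}) p Q"
proof -
  define E where "E = pairs_of {0..<n}"
  have fE: "finite E" unfolding E_def by (intro finite_pairs_of) auto
  have "measure_pmf.prob (gnp n p) {G. Q G} = measure_pmf.prob (gnp n p) (Pow E \<inter> {G. Q G})"
    by (rule measure_prob_cong_0) (auto simp: pmf_gnp[OF p] E_def)
  also have "\<dots> = (\<Sum>S\<in>Pow E \<inter> {G. Q G}. pmf (gnp n p) S)"
    using fE by (intro measure_measure_pmf_finite) auto
  also have "\<dots> = (\<Sum>S\<in>Pow E. if Q S then wt E p S else 0)"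
    using fE unfolding E_def by (simp add: sum.inter_restrict pmf_gnp[OF p])
  finally show ?thesis unfolding Pr_def E_def .
qed

definition copy :: "nat set set \<Rightarrow> nat list \<Rightarrow> nat set set" where
  "copy EF xs = (\<lambda>e. (!) xs ` e) ` EF"

lemma embeds_copy: "embeds_onto EF xs G \<longleftrightarrow> copy EF xs \<subseteq> G"
  unfolding embeds_onto_def copy_def by auto

lemma LS_D:
  assumes "xs \<in> labelled_subsets V v"
  shows "length xs = v" "distinct xs" "set xs \<subseteq> V" "inj_on ((!) xs) {0..<v}"
  using assms by (auto simp: labelled_subsets_def intro!: inj_on_nth)

lemma LG_D:
  assumes "labelled_graph v EF" "e \<in> EF"
  shows "e \<subseteq> {0..<v}" "card e = 2"
  using assms by (auto simp: labelled_graph_def pairs_of_def)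

lemma finite_EF: "labelled_graph v EF \<Longrightarrow> finite EF"
  unfolding labelled_graph_def using finite_pairs_of[of "{0..<v}"] by (auto intro: finite_subset)

lemma card_copy:
  assumes "labelled_graph v EF" "xs \<in> labelled_subsets V v"
  shows "card (copy EF xs) = card EF"
  unfolding copy_def
proof (rule card_image)
  show "inj_on (\<lambda>e. (!) xs ` e) EF"
  proof (rule inj_onI)
    fix x y assume "x \<in> EF" "y \<in> EF" "(!) xs ` x = (!) xs ` y"
    then show "x = y" using inj_on_image_eq_iff[OF LS_D(4)[OF assms(2)], of x y] LG_D(1)[OF assms(1)] by auto
  qed
qed

lemma copy_sub:
  assumes "labelled_graph v EF" "xs \<in> labelled_subsets {0..<n} v"
  shows "copy EF xs \<subseteq> pairs_of {0..<n}"
proof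
  fix y assume "y \<in> copy EF xs"
  then obtain e where e: "e \<in> EF" "y = (!) xs ` e" by (auto simp: copy_def)
  have ev: "e \<subseteq> {0..<v}" "card e = 2" using LG_D[OF assms(1) e(1)] by auto
  have "inj_on ((!) xs) e" using LS_D(4)[OF assms(2)] ev(1) by (rule inj_on_subset)
  then have "card y = 2" using e ev by (simp add: card_image)
  moreover have "y \<subseteq> {0..<n}"
    using e ev LS_D[OF assms(2)] by (auto intro!: nth_mem[THEN subsetD[OF LS_D(3)[OF assms(2)]]])
  ultimately show "y \<in> pairs_of {0..<n}" by (simp add: pairs_of_def)
qed

lemma finite_LS: "finite (labelled_subsets {0..<(n::nat)} v)"
  unfolding labelled_subsets_def
  by (rule finite_subset[OF _ finite_lists_length_eq[OF finite_atLeastLessThan[of "0::nat" n], of v]]) auto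

lemma card_LS: "card (labelled_subsets {0..<(n::nat)} v) \<le> n ^ v"
proof -
  have "card (labelled_subsets {0..<n} v) \<le> card {xs. set xs \<subseteq> {0..<n} \<and> length xs = v}"
    unfolding labelled_subsets_def
    by (rule card_mono[OF finite_lists_length_eq]) auto
  also have "\<dots> = n ^ v" by (simp add: card_lists_length_eq)
  finally show ?thesis .
qed

lemma card_lists_constr:
  assumes "\<And>j. finite (S j)"
  shows "card {ys. length ys = v \<and> (\<forall>j<v. ys ! j \<in> S j)} \<le> (\<Prod>j\<in>{0..<v}. card (S j))"
proof -
  have sub: "{ys. length ys = v \<and> (\<forall>j<v. ys ! j \<in> S j)} \<subseteq> (\<lambda>f. map f [0..<v]) ` PiE {0..<v} S"
  proof
    fix ys assume ys: "ys \<in> {ys. length ys = v \<and> (\<forall>j<v. ys ! j \<in> S j)}"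
    have "ys = map (restrict ((!) ys) {0..<v}) [0..<v]"
      using ys by (intro nth_equalityI) auto
    moreover have "restrict ((!) ys) {0..<v} \<in> PiE {0..<v} S" using ys by auto
    ultimately show "ys \<in> (\<lambda>f. map f [0..<v]) ` PiE {0..<v} S" by blast
  qed
  have fin: "finite (PiE {0..<v} S)" using assms by (intro finite_PiE) auto
  have "card {ys. length ys = v \<and> (\<forall>j<v. ys ! j \<in> S j)} \<le> card ((\<lambda>f. map f [0..<v]) ` PiE {0..<v} S)"
    using fin by (intro card_mono[OF _ sub]) auto
  also have "\<dots> \<le> card (PiE {0..<v} S)" using fin by (rule card_image_le)
  also have "\<dots> = (\<Prod>j\<in>{0..<v}. card (S j))" by (simp add: card_PiE)
  finally show ?thesis .
qed

definition Dset :: "nat set set \<Rightarrow> nat list \<Rightarrow> nat list \<Rightarrow> nat set set" where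
  "Dset EF xs ys = {f \<in> EF. (!) ys ` f \<in> copy EF xs}"

lemma union_card:
  assumes LG: "labelled_graph v EF" and xs: "xs \<in> labelled_subsets V v" and ys: "ys \<in> labelled_subsets V v"
  shows "2 * card EF - card (Dset EF xs ys) \<le> card (copy EF xs \<union> copy EF ys)"
    and "copy EF xs \<inter> copy EF ys \<noteq> {} \<Longrightarrow> Dset EF xs ys \<noteq> {}"
proof -
  have fE: "finite EF" using LG by (rule finite_EF)
  have sub: "copy EF xs \<inter> copy EF ys \<subseteq> (\<lambda>f. (!) ys ` f) ` Dset EF xs ys"
  proof
    fix y assume y: "y \<in> copy EF xs \<inter> copy EF ys"
    then obtain f where f: "f \<in> EF" "y = (!) ys ` f" by (auto simp: copy_def)
    then have "f \<in> Dset EF xs ys" using y by (auto simp: Dset_def)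
    then show "y \<in> (\<lambda>f. (!) ys ` f) ` Dset EF xs ys" using f by blast
  qed
  have fD: "finite (Dset EF xs ys)" using fE by (simp add: Dset_def)
  have "card (copy EF xs \<inter> copy EF ys) \<le> card (Dset EF xs ys)"
    using card_mono[OF _ sub] card_image_le[OF fD] fD by (meson finite_imageI order_trans)
  moreover have "card (copy EF xs) + card (copy EF ys) = card (copy EF xs \<union> copy EF ys) + card (copy EF xs \<inter> copy EF ys)"
    using fE by (intro card_Un_Int) (auto simp: copy_def)
  moreover have "card (copy EF xs) = card EF" "card (copy EF ys) = card EF"
    using card_copy[OF LG xs] card_copy[OF LG ys] by auto
  ultimately show "2 * card EF - card (Dset EF xs ys) \<le> card (copy EF xs \<union> copy EF ys)" by linarith
  show "Dset EF xs ys \<noteq> {}" if "copy EF xs \<inter> copy EF ys \<noteq> {}" using that sub by auto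
qed

lemma count_D:
  assumes LG: "labelled_graph v EF" and xs: "xs \<in> labelled_subsets {0..<n} v" and D: "D \<subseteq> EF"
  shows "card {ys \<in> labelled_subsets {0..<n} v. D \<subseteq> Dset EF xs ys} \<le> v ^ card (\<Union>D) * n ^ (v - card (\<Union>D))"
proof -
  define W where "W = \<Union>D"
  have W: "W \<subseteq> {0..<v}" using D LG_D(1)[OF LG] unfolding W_def by auto
  define S where "S = (\<lambda>j. if j \<in> W then set xs else {0..<n})"
  have sub: "{ys \<in> labelled_subsets {0..<n} v. D \<subseteq> Dset EF xs ys} \<subseteq> {ys. length ys = v \<and> (\<forall>j<v. ys ! j \<in> S j)}"
  proof safe
    fix ys assume ys: "ys \<in> labelled_subsets {0..<n} v" and Dys: "D \<subseteq> Dset EF xs ys"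
    show "length ys = v" using LS_D[OF ys] by simp
    fix j assume j: "j < v"
    show "ys ! j \<in> S j"
    proof (cases "j \<in> W")
      case True
      then obtain f where f: "f \<in> D" "j \<in> f" unfolding W_def by auto
      then have "(!) ys ` f \<in> copy EF xs" using Dys by (auto simp: Dset_def)
      then obtain f' where f': "f' \<in> EF" "(!) ys ` f = (!) xs ` f'" by (auto simp: copy_def)
      have "ys ! j \<in> (!) xs ` f'" using f f' by (metis imageI)
      moreover have "f' \<subseteq> {0..<v}" using LG_D(1)[OF LG f'(1)] .
      ultimately have "ys ! j \<in> set xs" using LS_D(1)[OF xs] by auto
      then show ?thesis using True by (simp add: S_def)
    next
      case False
      have "ys ! j \<in> set ys" using LS_D(1)[OF ys] j by simp
      then show ?thesis using LS_D(3)[OF ys] False by (auto simp: S_def)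
    qed
  qed
  have "card {ys \<in> labelled_subsets {0..<n} v. D \<subseteq> Dset EF xs ys} \<le> card {ys. length ys = v \<and> (\<forall>j<v. ys ! j \<in> S j)}"
  proof (rule card_mono[OF _ sub])
    show "finite {ys. length ys = v \<and> (\<forall>j<v. ys ! j \<in> S j)}"
    proof (rule finite_subset[OF _ finite_lists_length_eq[of "{0..<n} \<union> set xs" v]])
      show "{ys. length ys = v \<and> (\<forall>j<v. ys ! j \<in> S j)} \<subseteq> {ys. set ys \<subseteq> {0..<n} \<union> set xs \<and> length ys = v}"
      proof
        fix ys assume ys: "ys \<in> {ys. length ys = v \<and> (\<forall>j<v. ys ! j \<in> S j)}"
        have "set ys \<subseteq> {0..<n} \<union> set xs"
        proof
          fix x assume x: "x \<in> set ys"
          then obtain j where "j < v" "ys ! j = x" using ys by (auto simp: in_set_conv_nth)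
          then have "x \<in> S j" using ys by auto
          then show "x \<in> {0..<n} \<union> set xs" by (auto simp: S_def split: if_splits)
        qed
        then show "ys \<in> {ys. set ys \<subseteq> {0..<n} \<union> set xs \<and> length ys = v}" using ys by simp
      qed
    qed auto
  qed
  also have "\<dots> \<le> (\<Prod>j\<in>{0..<v}. card (S j))"
    by (rule card_lists_constr) (auto simp: S_def)
  also have "(\<Prod>j\<in>{0..<v}. card (S j)) = (\<Prod>j\<in>{0..<v}. if j \<in> W then v else n)"
    using distinct_card[OF LS_D(2)[OF xs]] LS_D(1)[OF xs] by (intro prod.cong) (auto simp: S_def)
  also have "\<dots> = v ^ card ({0..<v} \<inter> {j. j \<in> W}) * n ^ card ({0..<v} \<inter> - {j. j \<in> W})"
    by (simp add: prod.If_cases)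
  also have "{0..<v} \<inter> {j. j \<in> W} = W" using W by auto
  also have "{0..<v} \<inter> - {j. j \<in> W} = {0..<v} - W" by auto
  also have "card ({0..<v} - W) = v - card W" using W by (simp add: card_Diff_subset finite_subset)
  finally show ?thesis unfolding W_def .
qed

lemma term_bound:
  fixes n :: nat and p C :: real
  assumes p: "0 \<le> p" "p \<le> 1" and C: "0 \<le> C" and d: "d \<le> e" and w: "w \<le> v" and v: "1 \<le> v"
    and Phi: "C * real n \<le> real n ^ w * p ^ d"
  shows "p ^ (2 * e - d) * (real v ^ w * real n ^ (v - w)) * (C * real n) * real n ^ v
         \<le> real v ^ v * (real n ^ v * p ^ e)^2"
proof -
  have nn: "0 \<le> p ^ (2 * e - d) * (real v ^ w * real n ^ (v - w))" using p by simp
  have "p ^ (2 * e - d) * (real v ^ w * real n ^ (v - w)) * (C * real n) * real n ^ v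
      \<le> p ^ (2 * e - d) * (real v ^ w * real n ^ (v - w)) * (real n ^ w * p ^ d) * real n ^ v"
    using Phi nn by (intro mult_right_mono mult_left_mono) auto
  also have "\<dots> = real v ^ w * ((p ^ (2 * e - d) * p ^ d) * (real n ^ (v - w) * real n ^ w) * real n ^ v)"
    by (simp add: algebra_simps)
  also have "p ^ (2 * e - d) * p ^ d = p ^ (2 * e)"
    using d by (simp add: power_add[symmetric])
  also have "real n ^ (v - w) * real n ^ w = real n ^ v"
    using w by (simp add: power_add[symmetric])
  also have "real v ^ w * (p ^ (2 * e) * real n ^ v * real n ^ v) \<le> real v ^ v * (p ^ (2 * e) * real n ^ v * real n ^ v)"
    using p v w by (intro mult_right_mono power_increasing) auto
  also have "p ^ (2 * e) * real n ^ v * real n ^ v = (real n ^ v * p ^ e)^2"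
  proof -
    have "p ^ (2 * e) = p ^ e * p ^ e" by (simp add: mult_2 power_add)
    then show ?thesis by (simp add: power2_eq_square algebra_simps)
  qed
  finally show ?thesis .
qed

lemma delta_xs:
  fixes n :: nat and p C :: real
  assumes LG: "labelled_graph v EF" and EFne: "EF \<noteq> {}" and p: "0 \<le> p" "p \<le> 1" and C: "0 \<le> C"
    and xs: "xs \<in> labelled_subsets {0..<n} v" and Fam: "Fam \<subseteq> labelled_subsets {0..<n} v"
    and Phi: "\<And>W D. W \<subseteq> {0..<v} \<Longrightarrow> D \<subseteq> EF \<Longrightarrow> (\<forall>e\<in>D. e \<subseteq> W) \<Longrightarrow> card D > 0 \<Longrightarrow>
                C * real n \<le> real n ^ card W * p ^ card D"
  shows "(\<Sum>ys\<in>Fam. if xs \<noteq> ys \<and> copy EF xs \<inter> copy EF ys \<noteq> {} then p ^ card (copy EF xs \<union> copy EF ys) else 0)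
           * (C * real n) * real n ^ v \<le> 2 ^ card EF * real v ^ v * (real n ^ v * p ^ card EF)^2"
proof -
  define e where "e = card EF"
  define L where "L = labelled_subsets {0..<n} v"
  define DD where "DD = Pow EF - {{}}"
  define h where "h = (\<lambda>D::nat set set. p ^ (2 * e - card D))"
  define M where "M = real n ^ v * p ^ e"
  have fE: "finite EF" using LG by (rule finite_EF)
  have fL: "finite L" unfolding L_def by (rule finite_LS)
  have fDD: "finite DD" unfolding DD_def using fE by simp
  have hnn: "0 \<le> h D" for D using p by (simp add: h_def)
  obtain e0 where "e0 \<in> EF" using EFne by auto
  then have "e0 \<subseteq> {0..<v}" "card e0 = 2" using LG_D[OF LG] by auto
  then have "2 \<le> v" using card_mono[of "{0..<v}" e0] by simp
  then have v1: "1 \<le> v" by simp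
  define G where "G = (\<lambda>ys. \<Sum>D\<in>DD. if D \<subseteq> Dset EF xs ys then h D else 0)"
  have Gnn: "0 \<le> G ys" for ys unfolding G_def using hnn by (intro sum_nonneg) auto
  have step1: "(\<Sum>ys\<in>Fam. if xs \<noteq> ys \<and> copy EF xs \<inter> copy EF ys \<noteq> {} then p ^ card (copy EF xs \<union> copy EF ys) else 0)
      \<le> (\<Sum>ys\<in>L. G ys)"
  proof -
    have "(\<Sum>ys\<in>Fam. if xs \<noteq> ys \<and> copy EF xs \<inter> copy EF ys \<noteq> {} then p ^ card (copy EF xs \<union> copy EF ys) else 0)
        \<le> (\<Sum>ys\<in>Fam. G ys)"
    proof (rule sum_mono)
      fix ys assume ys: "ys \<in> Fam"
      then have ysL: "ys \<in> labelled_subsets {0..<n} v" using Fam by auto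
      show "(if xs \<noteq> ys \<and> copy EF xs \<inter> copy EF ys \<noteq> {} then p ^ card (copy EF xs \<union> copy EF ys) else 0) \<le> G ys"
      proof (cases "xs \<noteq> ys \<and> copy EF xs \<inter> copy EF ys \<noteq> {}")
        case True
        then have Dne: "Dset EF xs ys \<noteq> {}" using union_card(2)[OF LG xs ysL] by auto
        have DDin: "Dset EF xs ys \<in> DD" using Dne by (auto simp: DD_def Dset_def)
        have "p ^ card (copy EF xs \<union> copy EF ys) \<le> h (Dset EF xs ys)"
          unfolding h_def e_def using union_card(1)[OF LG xs ysL] p by (intro power_decreasing) auto
        also have "h (Dset EF xs ys) = (if Dset EF xs ys \<subseteq> Dset EF xs ys then h (Dset EF xs ys) else 0)" by simp
        also have "\<dots> \<le> G ys" unfolding G_def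
          using DDin fDD hnn by (intro member_le_sum[where f = "\<lambda>D. if D \<subseteq> Dset EF xs ys then h D else 0"]) auto
        finally show ?thesis using True by simp
      qed (use Gnn in auto)
    qed
    also have "\<dots> \<le> (\<Sum>ys\<in>L. G ys)"
      using Fam fL Gnn unfolding L_def by (intro sum_mono2) auto
    finally show ?thesis .
  qed
  have step2: "(\<Sum>ys\<in>L. G ys) = (\<Sum>D\<in>DD. h D * real (card {ys \<in> L. D \<subseteq> Dset EF xs ys}))"
  proof -
    have "(\<Sum>ys\<in>L. G ys) = (\<Sum>D\<in>DD. \<Sum>ys\<in>L. if D \<subseteq> Dset EF xs ys then h D else 0)"
      unfolding G_def by (rule sum.swap)
    also have "\<dots> = (\<Sum>D\<in>DD. h D * real (card {ys \<in> L. D \<subseteq> Dset EF xs ys}))"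
    proof (intro sum.cong refl)
      fix D
      have "(\<Sum>ys\<in>L. if D \<subseteq> Dset EF xs ys then h D else 0) = (\<Sum>ys\<in>{ys \<in> L. D \<subseteq> Dset EF xs ys}. h D)"
        using sum.inter_filter[OF fL, of "\<lambda>_. h D" "\<lambda>ys. D \<subseteq> Dset EF xs ys"] by simp
      then show "(\<Sum>ys\<in>L. if D \<subseteq> Dset EF xs ys then h D else 0) = h D * real (card {ys \<in> L. D \<subseteq> Dset EF xs ys})"
        by (simp add: mult.commute)
    qed
    finally show ?thesis .
  qed
  have step3: "h D * real (card {ys \<in> L. D \<subseteq> Dset EF xs ys}) * (C * real n) * real n ^ v \<le> real v ^ v * M^2"
    if D: "D \<in> DD" for D
  proof -
    define w where "w = card (\<Union>D)"
    have DEF: "D \<subseteq> EF" using D by (auto simp: DD_def)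
    have WV: "\<Union>D \<subseteq> {0..<v}" using DEF LG_D(1)[OF LG] by auto
    have wv: "w \<le> v" unfolding w_def using card_mono[OF _ WV] by simp
    have dpos: "card D > 0" using D fE by (auto simp: DD_def card_gt_0_iff intro: finite_subset)
    have de: "card D \<le> e" unfolding e_def using DEF fE by (rule card_mono[rotated])
    have Ph: "C * real n \<le> real n ^ w * p ^ card D"
      unfolding w_def using WV DEF dpos by (intro Phi) auto
    have cnt: "real (card {ys \<in> L. D \<subseteq> Dset EF xs ys}) \<le> real v ^ w * real n ^ (v - w)"
      using count_D[OF LG xs DEF] unfolding L_def w_def by (metis of_nat_le_iff of_nat_mult of_nat_power)
    have "h D * real (card {ys \<in> L. D \<subseteq> Dset EF xs ys}) * (C * real n) * real n ^ v
        \<le> h D * (real v ^ w * real n ^ (v - w)) * (C * real n) * real n ^ v"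
      using cnt hnn C by (intro mult_right_mono mult_left_mono) auto
    also have "\<dots> \<le> real v ^ v * M^2"
      unfolding h_def M_def using term_bound[OF p C de wv v1 Ph] .
    finally show ?thesis .
  qed
  have "(\<Sum>ys\<in>Fam. if xs \<noteq> ys \<and> copy EF xs \<inter> copy EF ys \<noteq> {} then p ^ card (copy EF xs \<union> copy EF ys) else 0)
           * (C * real n) * real n ^ v \<le> (\<Sum>ys\<in>L. G ys) * (C * real n) * real n ^ v"
    using step1 C by (intro mult_right_mono) auto
  also have "\<dots> = (\<Sum>D\<in>DD. h D * real (card {ys \<in> L. D \<subseteq> Dset EF xs ys}) * (C * real n) * real n ^ v)"
    unfolding step2 by (simp add: sum_distrib_right)
  also have "\<dots> \<le> (\<Sum>D\<in>DD. real v ^ v * M^2)"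
    using step3 by (rule sum_mono)
  also have "\<dots> = real (card DD) * (real v ^ v * M^2)" by simp
  also have "\<dots> \<le> 2 ^ e * (real v ^ v * M^2)"
  proof -
    have "card DD \<le> card (Pow EF)" unfolding DD_def using fE by (intro card_mono) auto
    also have "card (Pow EF) = 2 ^ e" using fE by (simp add: card_Pow e_def)
    finally have "real (card DD) \<le> 2 ^ e" by (metis of_nat_le_iff of_nat_numeral of_nat_power)
    then show ?thesis by (intro mult_right_mono) auto
  qed
  finally show ?thesis unfolding M_def e_def by (simp add: algebra_simps)
qed

lemma one_family:
  fixes n :: nat and p C \<beta> :: real
  assumes LG: "labelled_graph v EF" and EFne: "EF \<noteq> {}" and p: "0 \<le> p" "p \<le> 1"
    and n1: "1 \<le> n" and \<beta>: "0 < \<beta>"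
    and Fam: "Fam \<subseteq> labelled_subsets {0..<n} v" and cardF: "\<beta> * real n ^ v \<le> real (card Fam)"
    and Phi: "\<And>W D. W \<subseteq> {0..<v} \<Longrightarrow> D \<subseteq> EF \<Longrightarrow> (\<forall>e\<in>D. e \<subseteq> W) \<Longrightarrow> card D > 0 \<Longrightarrow>
                C * real n \<le> real n ^ card W * p ^ card D"
    and C1: "4 / \<beta> \<le> C" and C2: "8 * 2 ^ card EF * real v ^ v / \<beta>^2 \<le> C"
  shows "Pr (pairs_of {0..<n}) p (\<lambda>G. \<not> (\<exists>xs\<in>Fam. embeds_onto EF xs G)) \<le> exp (- (2 * real n))"
proof -
  define E where "E = pairs_of {0..<n}"
  define e where "e = card EF"
  define K where "K = 2 ^ e * real v ^ v"
  define M where "M = real n ^ v * p ^ e"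
  define \<mu> where "\<mu> = (\<Sum>xs\<in>Fam. p ^ card (copy EF xs))"
  define \<Delta> where "\<Delta> = (\<Sum>k\<in>Fam. \<Sum>j\<in>Fam. if k \<noteq> j \<and> copy EF k \<inter> copy EF j \<noteq> {} then p ^ card (copy EF k \<union> copy EF j) else 0)"
  have fE: "finite E" unfolding E_def by (intro finite_pairs_of) auto
  have fF: "finite Fam" using Fam finite_LS by (rule finite_subset)
  have fEF: "finite EF" using LG by (rule finite_EF)
  have Cpos: "0 < C" using C1 \<beta> by (smt (verit) divide_pos_pos)
  have npos: "0 < real n" using n1 by simp
  have Mge: "C * real n \<le> M"
  proof -
    have "C * real n \<le> real n ^ card {0..<v} * p ^ card EF"
      using LG_D(1)[OF LG] fEF EFne by (intro Phi) (auto simp: card_gt_0_iff)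
    then show ?thesis by (simp add: M_def e_def)
  qed
  have \<mu>eq: "\<mu> = real (card Fam) * p ^ e"
  proof -
    have "\<mu> = (\<Sum>xs\<in>Fam. p ^ e)"
      unfolding \<mu>_def e_def using Fam by (intro sum.cong refl) (auto simp: card_copy[OF LG])
    then show ?thesis by simp
  qed
  have \<mu>ge: "\<beta> * M \<le> \<mu>"
  proof -
    have "\<beta> * M = (\<beta> * real n ^ v) * p ^ e" by (simp add: M_def)
    also have "\<dots> \<le> real (card Fam) * p ^ e" using cardF p by (intro mult_right_mono) auto
    finally show ?thesis using \<mu>eq by simp
  qed
  have M0: "0 \<le> M" using p by (simp add: M_def)
  have c1: "2 * real n \<le> \<mu> / 2"
  proof -
    have "4 \<le> \<beta> * C" using C1 \<beta> by (simp add: field_simps)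
    then have "4 * real n \<le> \<beta> * C * real n" using npos by (intro mult_right_mono) auto
    also have "\<dots> \<le> \<beta> * M" using Mge \<beta> by (simp add: mult.assoc)
    finally show ?thesis using \<mu>ge by simp
  qed
  have \<Delta>C: "\<Delta> * (C * real n) \<le> K * M^2"
  proof -
    have "\<Delta> * (C * real n) * real n ^ v = (\<Sum>k\<in>Fam. (\<Sum>j\<in>Fam. if k \<noteq> j \<and> copy EF k \<inter> copy EF j \<noteq> {} then p ^ card (copy EF k \<union> copy EF j) else 0) * (C * real n) * real n ^ v)"
      unfolding \<Delta>_def by (simp add: sum_distrib_right)
    also have "\<dots> \<le> (\<Sum>k\<in>Fam. K * M^2)"
      unfolding K_def M_def e_def
      using Fam Cpos by (intro sum_mono delta_xs[OF LG EFne p]) (auto intro: Phi)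
    also have "\<dots> = real (card Fam) * (K * M^2)" by simp
    also have "\<dots> \<le> real n ^ v * (K * M^2)"
    proof (rule mult_right_mono)
      have "card Fam \<le> card (labelled_subsets {0..<n} v)" using Fam finite_LS by (rule card_mono[rotated])
      also have "\<dots> \<le> n ^ v" by (rule card_LS)
      finally show "real (card Fam) \<le> real n ^ v" by (metis of_nat_le_iff of_nat_power)
      show "0 \<le> K * M^2" by (simp add: K_def)
    qed
    finally have "\<Delta> * (C * real n) * real n ^ v \<le> (K * M^2) * real n ^ v" by (simp add: mult.commute)
    then show ?thesis using npos by simp
  qed
  have c2: "2 * real n * (4 * \<Delta>) \<le> \<mu>^2"
  proof -
    have "8 * K \<le> C * \<beta>^2" using C2 \<beta> by (simp add: K_def e_def field_simps)
    have "(2 * real n * (4 * \<Delta>)) * C = 8 * (\<Delta> * (C * real n))" by (simp add: algebra_simps)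
    also have "\<dots> \<le> 8 * (K * M^2)" using \<Delta>C by simp
    also have "\<dots> = (8 * K) * M^2" by simp
    also have "\<dots> \<le> (C * \<beta>^2) * M^2" using \<open>8 * K \<le> C * \<beta>^2\<close> by (intro mult_right_mono) auto
    finally have "(2 * real n * (4 * \<Delta>)) * C \<le> (\<beta> * M)^2 * C" by (simp add: algebra_simps power2_eq_square)
    then have "2 * real n * (4 * \<Delta>) \<le> (\<beta> * M)^2" using Cpos by simp
    also have "(\<beta> * M)^2 \<le> \<mu>^2" using \<mu>ge \<beta> M0 by (intro power_mono) auto
    finally show ?thesis .
  qed
  have "Pr E p (\<lambda>G. \<not> (\<exists>xs\<in>Fam. embeds_onto EF xs G)) = Pr E p (\<lambda>S. \<forall>xs\<in>Fam. \<not> copy EF xs \<subseteq> S)"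
    by (rule Pr_cong) (auto simp: embeds_copy)
  also have "\<dots> \<le> exp (- (2 * real n))"
    using Fam copy_sub[OF LG] c1 c2 unfolding \<mu>_def \<Delta>_def E_def
    by (intro janson_c[OF fE[unfolded E_def] p fF]) auto
  finally show ?thesis unfolding E_def .
qed

lemma main_n:
  fixes n t :: nat and p C \<beta> :: real
  assumes LG: "labelled_graph v EF" and EFne: "EF \<noteq> {}" and p: "0 \<le> p" "p \<le> 1"
    and n1: "1 \<le> n" and \<beta>: "0 < \<beta>" and t: "t \<le> 2 ^ n"
    and Fam: "\<forall>i\<in>{1..t}. Fam i \<subseteq> labelled_subsets {0..<n} v \<and> real (card (Fam i)) \<ge> \<beta> * real n ^ v"
    and PhiH: "Phi v EF n p \<ge> ereal (C * real n)"
    and C1: "4 / \<beta> \<le> C" and C2: "8 * 2 ^ card EF * real v ^ v / \<beta>^2 \<le> C"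
  shows "1 - (2 * exp (-2)) ^ n \<le> measure_pmf.prob (gnp n p) {G. \<forall>i\<in>{1..t}. \<exists>xs\<in>Fam i. embeds_onto EF xs G}"
proof -
  define E where "E = pairs_of {0..<n}"
  have fE: "finite E" unfolding E_def by (intro finite_pairs_of) auto
  have Phi': "C * real n \<le> real n ^ card W * p ^ card D"
    if "W \<subseteq> {0..<v}" "D \<subseteq> EF" "\<forall>e\<in>D. e \<subseteq> W" "card D > 0" for W D
  proof -
    have "Phi v EF n p \<le> ereal (real n ^ card W * p ^ card D)"
      unfolding Phi_def by (rule Inf_lower) (use that in blast)
    with PhiH have "ereal (C * real n) \<le> ereal (real n ^ card W * p ^ card D)" by (rule order_trans)
    then show ?thesis by simp
  qed
  have one: "Pr E p (\<lambda>G. \<not> (\<exists>xs\<in>Fam i. embeds_onto EF xs G)) \<le> exp (- (2 * real n))"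
    if i: "i \<in> {1..t}" for i
    unfolding E_def
    using Fam i by (intro one_family[OF LG EFne p n1 \<beta> _ _ Phi' C1 C2]) auto
  have "Pr E p (\<lambda>G. \<not> (\<forall>i\<in>{1..t}. \<exists>xs\<in>Fam i. embeds_onto EF xs G))
      = Pr E p (\<lambda>G. \<exists>i\<in>{1..t}. \<not> (\<exists>xs\<in>Fam i. embeds_onto EF xs G))"
    by (rule Pr_cong) auto
  also have "\<dots> \<le> (\<Sum>i\<in>{1..t}. Pr E p (\<lambda>G. \<not> (\<exists>xs\<in>Fam i. embeds_onto EF xs G)))"
    using p by (intro Pr_union_bound) auto
  also have "\<dots> \<le> (\<Sum>i\<in>{1..t}. exp (- (2 * real n)))"
    using one by (rule sum_mono)
  also have "\<dots> = real t * exp (- (2 * real n))" by simp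
  also have "\<dots> \<le> 2 ^ n * exp (- (2 * real n))"
  proof (rule mult_right_mono)
    show "real t \<le> 2 ^ n" using t by (metis of_nat_le_iff of_nat_numeral of_nat_power)
  qed simp
  also have "exp (- (2 * real n)) = exp (-2) ^ n"
    by (subst exp_of_nat_mult[symmetric]) (simp add: mult.commute)
  also have "2 ^ n * exp (-2) ^ n = (2 * exp (-2 :: real)) ^ n"
    by (simp add: power_mult_distrib)
  finally have bad: "Pr E p (\<lambda>G. \<not> (\<forall>i\<in>{1..t}. \<exists>xs\<in>Fam i. embeds_onto EF xs G)) \<le> (2 * exp (-2)) ^ n" .
  have "measure_pmf.prob (gnp n p) {G. \<forall>i\<in>{1..t}. \<exists>xs\<in>Fam i. embeds_onto EF xs G}
      = Pr E p (\<lambda>G. \<forall>i\<in>{1..t}. \<exists>xs\<in>Fam i. embeds_onto EF xs G)"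
    unfolding E_def by (rule prob_gnp[OF p])
  also have "\<dots> = 1 - Pr E p (\<lambda>G. \<not> (\<forall>i\<in>{1..t}. \<exists>xs\<in>Fam i. embeds_onto EF xs G))"
    using Pr_compl[OF fE, of p "\<lambda>G. \<not> (\<forall>i\<in>{1..t}. \<exists>xs\<in>Fam i. embeds_onto EF xs G)"] by simp
  finally show ?thesis using bad by simp
qed

lemma two_exp: "2 * exp (-2::real) < 1"
proof -
  have "3 \<le> exp (2::real)" using exp_ge_add_one_self[of 2] by simp
  then show ?thesis by (simp add: exp_minus field_simps)
qed

theorem corollary2p9:
  fixes \<beta> :: real and v :: nat and EF :: "nat set set"
  assumes "\<beta> > 0" and "labelled_graph v EF"
  shows "\<exists>C>0. \<forall>(t :: nat \<Rightarrow> nat) (Fam :: nat \<Rightarrow> nat \<Rightarrow> nat list set) (p :: nat \<Rightarrow> real).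
     (\<forall>\<^sub>F n in sequentially. 1 \<le> t n \<and> t n \<le> 2 ^ n) \<longrightarrow>
     (\<forall>\<^sub>F n in sequentially. \<forall>i\<in>{1..t n}.
          Fam n i \<subseteq> labelled_subsets {0..<n} v \<and> real (card (Fam n i)) \<ge> \<beta> * real n ^ v) \<longrightarrow>
     (\<forall>n. 0 \<le> p n \<and> p n \<le> 1) \<longrightarrow>
     (\<forall>\<^sub>F n in sequentially. Phi v EF n (p n) \<ge> ereal (C * real n)) \<longrightarrow>
     ((\<lambda>n. measure_pmf.prob (gnp n (p n))
              {G. \<forall>i\<in>{1..t n}. \<exists>xs\<in>Fam n i. embeds_onto EF xs G}) \<longlonglongrightarrow> 1)"
proof (cases "EF = {}")
  case True
  show ?thesis
  proof (intro exI[of _ 1] conjI allI impI)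
    show "(0::real) < 1" by simp
    fix t :: "nat \<Rightarrow> nat" and Fam :: "nat \<Rightarrow> nat \<Rightarrow> nat list set" and p :: "nat \<Rightarrow> real"
    assume h2: "\<forall>\<^sub>F n in sequentially. \<forall>i\<in>{1..t n}.
          Fam n i \<subseteq> labelled_subsets {0..<n} v \<and> real (card (Fam n i)) \<ge> \<beta> * real n ^ v"
    have ev: "\<forall>\<^sub>F n in sequentially. (\<forall>i\<in>{1..t n}.
          Fam n i \<subseteq> labelled_subsets {0..<n} v \<and> real (card (Fam n i)) \<ge> \<beta> * real n ^ v) \<and> 1 \<le> n"
      using eventually_conj[OF h2 eventually_ge_at_top[of 1]] .
    show "(\<lambda>n. measure_pmf.prob (gnp n (p n)) {G. \<forall>i\<in>{1..t n}. \<exists>xs\<in>Fam n i. embeds_onto EF xs G}) \<longlonglongrightarrow> 1"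
    proof (rule tendsto_eventually, rule eventually_mono[OF ev])
      fix n assume hn: "(\<forall>i\<in>{1..t n}.
          Fam n i \<subseteq> labelled_subsets {0..<n} v \<and> real (card (Fam n i)) \<ge> \<beta> * real n ^ v) \<and> 1 \<le> n"
      have "Fam n i \<noteq> {}" if "i \<in> {1..t n}" for i
      proof -
        have "0 < \<beta> * real n ^ v" using assms(1) hn by simp
        also have "\<dots> \<le> real (card (Fam n i))" using hn that by auto
        finally show ?thesis by auto
      qed
      then have "{G. \<forall>i\<in>{1..t n}. \<exists>xs\<in>Fam n i. embeds_onto EF xs G} = UNIV"
        using True by (auto simp: embeds_onto_def)
      then show "measure_pmf.prob (gnp n (p n)) {G. \<forall>i\<in>{1..t n}. \<exists>xs\<in>Fam n i. embeds_onto EF xs G} = 1"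
        by simp
    qed
  qed
next
  case False
  define C where "C = max (4 / \<beta>) (8 * 2 ^ card EF * real v ^ v / \<beta>^2)"
  have Cpos: "0 < C" unfolding C_def using assms(1) by (simp add: less_max_iff_disj)
  show ?thesis
  proof (intro exI[of _ C] conjI allI impI)
    show "0 < C" by (rule Cpos)
    fix t :: "nat \<Rightarrow> nat" and Fam :: "nat \<Rightarrow> nat \<Rightarrow> nat list set" and p :: "nat \<Rightarrow> real"
    assume h1: "\<forall>\<^sub>F n in sequentially. 1 \<le> t n \<and> t n \<le> 2 ^ n"
      and h2: "\<forall>\<^sub>F n in sequentially. \<forall>i\<in>{1..t n}.
          Fam n i \<subseteq> labelled_subsets {0..<n} v \<and> real (card (Fam n i)) \<ge> \<beta> * real n ^ v"
      and h3: "\<forall>n. 0 \<le> p n \<and> p n \<le> 1"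
      and h4: "\<forall>\<^sub>F n in sequentially. Phi v EF n (p n) \<ge> ereal (C * real n)"
    have ev: "\<forall>\<^sub>F n in sequentially. 1 - (2 * exp (-2)) ^ n \<le>
        measure_pmf.prob (gnp n (p n)) {G. \<forall>i\<in>{1..t n}. \<exists>xs\<in>Fam n i. embeds_onto EF xs G}"
    proof (rule eventually_mono[OF eventually_conj[OF h1 eventually_conj[OF h2 eventually_conj[OF h4 eventually_ge_at_top[of 1]]]]])
      fix n assume hn: "(1 \<le> t n \<and> t n \<le> 2 ^ n) \<and> (\<forall>i\<in>{1..t n}.
          Fam n i \<subseteq> labelled_subsets {0..<n} v \<and> real (card (Fam n i)) \<ge> \<beta> * real n ^ v) \<and>
          Phi v EF n (p n) \<ge> ereal (C * real n) \<and> 1 \<le> n"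
      show "1 - (2 * exp (-2)) ^ n \<le>
        measure_pmf.prob (gnp n (p n)) {G. \<forall>i\<in>{1..t n}. \<exists>xs\<in>Fam n i. embeds_onto EF xs G}"
        using hn h3 assms False
        by (intro main_n[where C = C and \<beta> = \<beta>]) (auto simp: C_def)
    qed
    have ev2: "\<forall>\<^sub>F n in sequentially.
        measure_pmf.prob (gnp n (p n)) {G. \<forall>i\<in>{1..t n}. \<exists>xs\<in>Fam n i. embeds_onto EF xs G} \<le> 1"
      by (simp add: measure_pmf.prob_le_1)
    have lim: "(\<lambda>n. 1 - (2 * exp (-2::real)) ^ n) \<longlonglongrightarrow> 1 - 0"
      using two_exp by (intro tendsto_diff tendsto_const LIMSEQ_power_zero) auto
    show "(\<lambda>n. measure_pmf.prob (gnp n (p n)) {G. \<forall>i\<in>{1..t n}. \<exists>xs\<in>Fam n i. embeds_onto EF xs G}) \<longlonglongrightarrow> 1"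
      using lim by (intro tendsto_sandwich[OF ev ev2]) auto
  qed
qed

end
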